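(* Let $G$ be a finite directed multigraph with at least one cycle, and let $H$ be its largest full subgraph (the subgraph with vertex set $V(G)$ whose edges are exactly the edges of $G$ that belong to some cycle of $G$). Then $$\dim P(G) = |E(H)| - |V(G)| + c(H) - 1,$$ where $c(H)$ is the number of connected components of $H$ (counting isolated vertices as components).
   Context: For a directed multigraph $G$: a walk is a sequence of edges $(e_1,\dots,e_k)$ with $\mathrm{ar}(e_i)=\mathrm{st}(e_{i+1})$; a cycle is a walk with $\mathrm{st}(e_1)=\mathrm{ar}(e_k)$; a path is a walk with distinct edges and distinct vertices except possibly $\mathrm{st}(e_1)=\mathrm{ar}(e_k)$; a simple cycle is a non-empty cycle that is a path. For a non-empty cycle $\mathcal{C}$, $(\vec{e}_{\mathcal{C}})_e=n_e(\mathcal{C})/|\mathcal{C}|$ for $e\in E(G)$ ($n_e$ = number of traversals of $e$, $|\mathcal{C}|$ = number of edges). $P(G)=\mathrm{conv}\{\vec{e}_{\mathcal{C}}\mid\mathcal{C}\text{ simple cycle of }G\}\subset\mathbb{R}^{E(G)}$. A subgraph $H=(V(G),E')$, $E'\subseteq E(G)$, is full if every edge of $E'$ lies on a cycle of $H$. The dimension of a polytope is that of its affine span. *)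

theory Defs
  imports "HOL-Analysis.Analysis" "Graph_Theory.Digraph"
begin

definition walk :: "('a,'b) pre_digraph \<Rightarrow> 'b list \<Rightarrow> bool" where
  "walk G es \<longleftrightarrow> set es \<subseteq> arcs G \<and>
     (\<forall>i. Suc i < length es \<longrightarrow> head G (es ! i) = tail G (es ! Suc i))"

definition is_cycle :: "('a,'b) pre_digraph \<Rightarrow> 'b list \<Rightarrow> bool" where
  "is_cycle G es \<longleftrightarrow> walk G es \<and> (es \<noteq> [] \<longrightarrow> tail G (hd es) = head G (last es))"

definition walk_verts :: "('a,'b) pre_digraph \<Rightarrow> 'b list \<Rightarrow> 'a list" where
  "walk_verts G es = map (tail G) es @ [head G (last es)]"

text \<open>A path: walk with distinct edges and distinct vertices, except possibly v_0 = v_k.\<close>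
definition is_path :: "('a,'b) pre_digraph \<Rightarrow> 'b list \<Rightarrow> bool" where
  "is_path G es \<longleftrightarrow> walk G es \<and> distinct es \<and>
     (es \<noteq> [] \<longrightarrow> distinct (butlast (walk_verts G es)) \<and> distinct (tl (walk_verts G es)))"

definition simple_cycle :: "('a,'b) pre_digraph \<Rightarrow> 'b list \<Rightarrow> bool" where
  "simple_cycle G es \<longleftrightarrow> es \<noteq> [] \<and> is_cycle G es \<and> is_path G es"

text \<open>The vector e_C: coordinate e is n_e(C)/|C|. Coordinates are indexed by the
  finite edge type; for edges of G this is exactly R^E(G), other coordinates are 0.\<close>
definition cycle_vec :: "'b list \<Rightarrow> real ^ ('b::finite)" where
  "cycle_vec es = (\<chi> e. real (count_list es e) / real (length es))"

definition cycle_polytope :: "('a,'b::finite) pre_digraph \<Rightarrow> (real ^ 'b) set" where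
  "cycle_polytope G = convex hull {cycle_vec es | es. simple_cycle G es}"

definition full_part :: "('a,'b) pre_digraph \<Rightarrow> ('a,'b) pre_digraph" where
  "full_part G = G\<lparr>arcs := {e \<in> arcs G. \<exists>es. is_cycle G es \<and> e \<in> set es}\<rparr>"

text \<open>Number of (weakly) connected components, isolated vertices counted.\<close>
definition conn_rel :: "('a,'b) pre_digraph \<Rightarrow> ('a \<times> 'a) set" where
  "conn_rel G = Id_on (verts G) \<union>
     ({(tail G e, head G e) | e. e \<in> arcs G} \<union> {(head G e, tail G e) | e. e \<in> arcs G})\<^sup>+"

definition num_components :: "('a,'b) pre_digraph \<Rightarrow> nat" where
  "num_components G = card (verts G // conn_rel G)"

end

theory Submission imports Defs "HOL-Library.Multiset" begin


lemma walk_Nil[simp]: "walk G []" by (simp add: walk_def)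

lemma walk_Cons: "walk G (x # xs) \<longleftrightarrow> x \<in> arcs G \<and> walk G xs \<and> (xs \<noteq> [] \<longrightarrow> head G x = tail G (hd xs))"
proof
  assume w: "walk G (x # xs)"
  have "walk G xs" unfolding walk_def
  proof (intro conjI allI impI)
    show "set xs \<subseteq> arcs G" using w by (auto simp: walk_def)
    fix i assume "Suc i < length xs"
    then have "Suc (Suc i) < length (x#xs)" by simp
    with w have "head G ((x#xs)! Suc i) = tail G ((x#xs) ! Suc (Suc i))" unfolding walk_def by blast
    then show "head G (xs ! i) = tail G (xs ! Suc i)" by simp
  qed
  moreover have "xs \<noteq> [] \<longrightarrow> head G x = tail G (hd xs)"
    using w unfolding walk_def by (cases xs) auto
  ultimately show "x \<in> arcs G \<and> walk G xs \<and> (xs \<noteq> [] \<longrightarrow> head G x = tail G (hd xs))"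
    using w by (auto simp: walk_def)
next
  assume h: "x \<in> arcs G \<and> walk G xs \<and> (xs \<noteq> [] \<longrightarrow> head G x = tail G (hd xs))"
  show "walk G (x # xs)" unfolding walk_def
  proof (intro conjI allI impI)
    show "set (x # xs) \<subseteq> arcs G" using h by (auto simp: walk_def)
    fix i assume i: "Suc i < length (x # xs)"
    show "head G ((x # xs) ! i) = tail G ((x # xs) ! Suc i)"
    proof (cases i)
      case 0 then show ?thesis using h i by (cases xs) auto
    next
      case (Suc j) then show ?thesis using h i by (auto simp: walk_def)
    qed
  qed
qed

lemma walk_append: "walk G (xs @ ys) \<longleftrightarrow> walk G xs \<and> walk G ys \<and> (xs \<noteq> [] \<longrightarrow> ys \<noteq> [] \<longrightarrow> head G (last xs) = tail G (hd ys))"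
  by (induction xs) (auto simp: walk_Cons)

lemma cycle_rotate1: "is_cycle G es \<Longrightarrow> is_cycle G (rotate1 es)"
  by (cases es) (auto simp: is_cycle_def walk_append walk_Cons hd_append split: if_splits)

lemma cycle_rotate: "is_cycle G es \<Longrightarrow> is_cycle G (rotate n es)"
  by (induction n) (auto simp: cycle_rotate1)

lemma cycle_heads: assumes "is_cycle G es"
  shows "map (head G) es = rotate1 (map (tail G) es)"
proof (rule nth_equalityI)
  show "length (map (head G) es) = length (rotate1 (map (tail G) es))" by simp
  fix i assume i: "i < length (map (head G) es)"
  show "map (head G) es ! i = rotate1 (map (tail G) es) ! i"
  proof (cases "Suc i < length es")
    case True
    then show ?thesis using assms i by (simp add: nth_rotate1 is_cycle_def walk_def)
  next
    case False
    then have "i = length es - 1" "es \<noteq> []" using i by auto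
    then show ?thesis using assms i
      by (simp add: nth_rotate1 is_cycle_def hd_conv_nth last_conv_nth)
  qed
qed




definition cnt :: "'b list \<Rightarrow> real ^ ('b::finite)" where
  "cnt es = (\<chi> e. real (count_list es e))"

lemma cnt_Nil[simp]: "cnt [] = 0" by (simp add: cnt_def vec_eq_iff)
lemma cnt_Cons: "cnt (x # xs) = axis x 1 + cnt xs"
  by (simp add: cnt_def vec_eq_iff axis_def)
lemma cnt_append: "cnt (xs @ ys) = cnt xs + cnt ys"
  by (simp add: cnt_def vec_eq_iff)
lemma cnt_rotate: "cnt (rotate n es) = cnt es"
proof -
  have r1: "count_list (rotate1 xs) e = count_list xs e" for xs :: "'a list" and e
    by (cases xs) auto
  have "count_list (rotate n es) e = count_list es e" for e
    by (induction n) (auto simp: r1)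
  then show ?thesis by (simp add: cnt_def)
qed
lemma inner_cnt: "z \<bullet> cnt es = sum_list (map (\<lambda>e. z $ e) es)"
  by (induction es) (auto simp: cnt_Cons inner_add_right inner_axis)
lemma cycle_vec_eq: "cycle_vec es = (1 / real (length es)) *\<^sub>R cnt es"
  by (simp add: cycle_vec_def cnt_def vec_eq_iff)

lemma simple_of_distinct:
  assumes c: "is_cycle G es" and ne: "es \<noteq> []" and d: "distinct (map (tail G) es)"
  shows "simple_cycle G es"
proof -
  obtain x xs where es: "es = x # xs" using ne by (cases es) auto
  have h: "head G (last es) = tail G x" using c es by (simp add: is_cycle_def)
  have "distinct es" using d by (simp add: distinct_map)
  moreover have "butlast (walk_verts G es) = map (tail G) es" by (simp add: walk_verts_def)
  moreover have "tl (walk_verts G es) = map (tail G) xs @ [tail G x]"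
    using h es by (simp add: walk_verts_def)
  ultimately show ?thesis using c ne d es unfolding simple_cycle_def is_path_def is_cycle_def
    by auto
qed

lemma cycle_decomp:
  assumes S: "\<And>es. simple_cycle G es \<Longrightarrow> z \<bullet> cnt es = 0"
  shows "is_cycle G es \<Longrightarrow> z \<bullet> cnt es = (0::real)"
proof (induction "length es" arbitrary: es rule: less_induct)
  case less
  show ?case
  proof (cases "es = []")
    case True then show ?thesis by simp
  next
    case ne: False
    show ?thesis
    proof (cases "distinct (map (tail G) es)")
      case True then show ?thesis using S simple_of_distinct[OF less(2) ne] by blast
    next
      case False
      then obtain i j where ij: "i < j" "j < length es" "tail G (es!i) = tail G (es!j)"
        unfolding distinct_conv_nth by (auto, metis linorder_neqE_nat)
      define n where "n = length es"
      define es' where "es' = rotate i es"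
      define k where "k = j - i"
      have c': "is_cycle G es'" using less(2) by (simp add: es'_def cycle_rotate)
      have len': "length es' = n" by (simp add: es'_def n_def)
      have k: "0 < k" "k < n" using ij by (auto simp: k_def n_def)
      have "rotate i es ! 0 = es ! ((i+0) mod length es)" using ij nth_rotate[of 0 es i] by linarith
      then have t0: "es' ! 0 = es ! i" using ij by (simp add: es'_def)
      have tk: "es' ! k = es ! j" using ij by (simp add: es'_def nth_rotate k_def)
      define b where "b = take k es'"
      define c where "c = drop k es'"
      have split: "es' = b @ c" by (simp add: b_def c_def)
      have bne: "b \<noteq> []" and cne: "c \<noteq> []" using k len' by (auto simp: b_def c_def)
      have w': "walk G es'" using c' by (simp add: is_cycle_def)
      then have wb: "walk G b" and wc: "walk G c" using split walk_append by metis+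
      have hb: "hd b = es' ! 0" using bne by (simp add: b_def hd_conv_nth)
      have lb: "last b = es' ! (k - 1)" using bne k len' by (simp add: b_def last_conv_nth)
      have "Suc (k - 1) < length es'" using k len' by simp
      then have "head G (es' ! (k - 1)) = tail G (es' ! Suc (k - 1))"
        using w' unfolding walk_def by blast
      then have "head G (es' ! (k - 1)) = tail G (es' ! k)" using k by simp
      then have cb: "is_cycle G b" using wb hb lb t0 tk ij by (simp add: is_cycle_def)
      have hc: "hd c = es' ! k" using k len' by (simp add: c_def hd_drop_conv_nth)
      have lc: "last c = last es'" using split cne by simp
      have "tail G (hd es') = head G (last es')" using c' k len' by (auto simp: is_cycle_def)
      moreover have "es' \<noteq> []" using k len' by auto
      then have "hd es' = es' ! 0" by (rule hd_conv_nth)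
      ultimately have cc: "is_cycle G c" using wc hc lc t0 tk ij by (simp add: is_cycle_def)
      have "length b < length es" "length c < length es" using k len' by (auto simp: b_def c_def n_def)
      then have "z \<bullet> cnt b = 0" "z \<bullet> cnt c = 0" using less(1) cb cc by blast+
      moreover have "cnt es = cnt b + cnt c"
        using split cnt_rotate[of i es] by (simp add: es'_def cnt_append)
      ultimately show ?thesis by (simp add: inner_add_right)
    qed
  qed
qed




lemma full_part_simps[simp]: "verts (full_part G) = verts G" "tail (full_part G) = tail G"
  "head (full_part G) = head G"
  "arcs (full_part G) = {e \<in> arcs G. \<exists>es. is_cycle G es \<and> e \<in> set es}"
  by (simp_all add: full_part_def)

definition wk :: "('a,'b) pre_digraph \<Rightarrow> 'a \<Rightarrow> 'b list \<Rightarrow> 'a \<Rightarrow> bool" where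
  "wk G u es v \<longleftrightarrow> walk G es \<and> (if es = [] then u = v else tail G (hd es) = u \<and> head G (last es) = v)"

lemma wk_Nil: "wk G u [] u" by (simp add: wk_def)

lemma wk_append: "wk G u xs v \<Longrightarrow> wk G v ys w \<Longrightarrow> wk G u (xs @ ys) w"
  by (auto simp: wk_def walk_append split: if_splits)

lemma wk_closed: "wk G u es u \<Longrightarrow> is_cycle G es"
  by (auto simp: wk_def is_cycle_def split: if_splits)

lemma wk_edge: "e \<in> arcs G \<Longrightarrow> wk G (tail G e) [e] (head G e)"
  by (simp add: wk_def walk_Cons)

lemma wk_back:
  assumes "e \<in> arcs (full_part G)"
  shows "\<exists>es. wk G (head G e) es (tail G e)"
proof -
  obtain cs where cs: "is_cycle G cs" "e \<in> set cs" using assms by auto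
  then obtain a b where ab: "cs = a @ e # b" by (meson split_list)
  have "rotate (length a) cs = (e # b) @ a" using ab by (simp add: rotate_append)
  then have "is_cycle G (e # (b @ a))" using cycle_rotate[OF cs(1), of "length a"] by simp
  then obtain ba where c: "is_cycle G (e # ba)" by blast
  then have w: "walk G ba" "ba \<noteq> [] \<longrightarrow> head G e = tail G (hd ba)"
    unfolding is_cycle_def walk_Cons by blast+
  have "wk G (head G e) ba (tail G e)"
  proof (cases "ba = []")
    case True then show ?thesis using c by (simp add: wk_def is_cycle_def)
  next
    case False
    have l: "last (e # ba) = last ba" by (rule last_ConsR[OF False])
    have "tail G e = head G (last (e # ba))" using c by (simp add: is_cycle_def)
    then show ?thesis using w False l unfolding wk_def by simp
  qed
  then show ?thesis by blast
qed

context
  fixes G :: "('a, 'b::finite) pre_digraph"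
  assumes fin: "fin_digraph G"
begin

abbreviation "EE \<equiv> arcs (full_part G)"
abbreviation "RR \<equiv> conn_rel (full_part G)"

lemma EE_sub: "EE \<subseteq> arcs G" by auto

lemma tail_V: "e \<in> arcs G \<Longrightarrow> tail G e \<in> verts G"
  using fin by (simp add: fin_digraph_def wf_digraph_def)
lemma head_V: "e \<in> arcs G \<Longrightarrow> head G e \<in> verts G"
  using fin by (simp add: fin_digraph_def wf_digraph_def)
lemma finV: "finite (verts G)" using fin by (simp add: fin_digraph_def fin_digraph_axioms_def)
lemma finA: "finite (arcs G)" using fin by (simp add: fin_digraph_def fin_digraph_axioms_def)

abbreviation "SS \<equiv> {(tail G e, head G e) | e. e \<in> EE} \<union> {(head G e, tail G e) | e. e \<in> EE}"

lemma RR_eq: "RR = Id_on (verts G) \<union> SS\<^sup>+"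
  by (simp add: conn_rel_def)

lemma SS_sub: "SS \<subseteq> verts G \<times> verts G"
  using tail_V head_V by auto

lemma equiv_RR: "equiv (verts G) RR"
proof -
  have t: "SS\<^sup>+ \<subseteq> verts G \<times> verts G" using SS_sub by (rule trancl_subset_Sigma)
  have s: "sym (SS\<^sup>+)" by (rule sym_trancl) (auto simp: sym_def)
  show ?thesis unfolding equiv_def RR_eq
  proof (intro conjI)
    show "Id_on (verts G) \<union> SS\<^sup>+ \<subseteq> verts G \<times> verts G" using t by blast
    show "refl_on (verts G) (Id_on (verts G) \<union> SS\<^sup>+)" by (auto simp: refl_on_def)
    show "sym (Id_on (verts G) \<union> SS\<^sup>+)" by (intro sym_Un s) (auto simp: sym_def)
    show "trans (Id_on (verts G) \<union> SS\<^sup>+)" unfolding trans_def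
    proof (intro allI impI)
      fix x y w assume 1: "(x, y) \<in> Id_on (verts G) \<union> SS\<^sup>+" and 2: "(y, w) \<in> Id_on (verts G) \<union> SS\<^sup>+"
      show "(x, w) \<in> Id_on (verts G) \<union> SS\<^sup>+"
      proof (cases "(x, y) \<in> Id_on (verts G)")
        case True then have "x = y" by (rule Id_onE) simp
        then show ?thesis using 2 by simp
      next
        case F1: False
        then have xy: "(x, y) \<in> SS\<^sup>+" using 1 by blast
        show ?thesis
        proof (cases "(y, w) \<in> Id_on (verts G)")
          case True then have "y = w" by (rule Id_onE) simp
          then show ?thesis using 1 by simp
        next
          case False
          then have "(y, w) \<in> SS\<^sup>+" using 2 by blast
          then have "(x, w) \<in> SS\<^sup>+" using xy by (rule trancl_trans[rotated])
          then show ?thesis by blast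
        qed
      qed
    qed
  qed
qed

lemma edge_RR: "e \<in> EE \<Longrightarrow> (tail G e, head G e) \<in> RR"
  unfolding RR_eq by (rule UnI2, rule r_into_trancl, rule UnI1) blast

lemma RR_wk: assumes "(u, v) \<in> RR" shows "\<exists>es. wk G u es v"
proof -
  have base1: "\<exists>es. wk G x es y" if xy: "(x, y) \<in> SS" for x y
    using xy
  proof (rule UnE)
    assume "(x, y) \<in> {(tail G e, head G e) | e. e \<in> EE}"
    then obtain e where e: "e \<in> EE" "x = tail G e" "y = head G e" by blast
    have "e \<in> arcs G" using e(1) by simp
    then have "wk G (tail G e) [e] (head G e)" by (rule wk_edge)
    then show ?thesis using e by blast
  next
    assume "(x, y) \<in> {(head G e, tail G e) | e. e \<in> EE}"
    then obtain e where e: "e \<in> EE" "x = head G e" "y = tail G e" by blast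
    obtain bs where "wk G (head G e) bs (tail G e)" using wk_back[OF e(1)] by blast
    then show ?thesis using e by blast
  qed
  have tr: "\<exists>es. wk G u es v" if "(u, v) \<in> SS\<^sup>+"
    using that
  proof (induction rule: trancl_induct)
    case (base y) then show ?case by (rule base1)
  next
    case (step y z)
    obtain es1 where 1: "wk G u es1 y" using step.IH by blast
    obtain es2 where 2: "wk G y es2 z" using base1[OF step.hyps(2)] by blast
    have "wk G u (es1 @ es2) z" using 1 2 by (rule wk_append)
    then show ?case by blast
  qed
  show ?thesis
  proof (cases "(u, v) \<in> Id_on (verts G)")
    case True then have "u = v" by (rule Id_onE) simp
    then show ?thesis using wk_Nil[of G u] by auto
  next
    case False then have "(u, v) \<in> SS\<^sup>+" using assms unfolding RR_eq by blast
    then show ?thesis by (rule tr)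
  qed
qed

lemma potential:
  assumes Z: "\<And>es. is_cycle G es \<Longrightarrow> z \<bullet> cnt es = (0::real)"
  shows "\<exists>p. \<forall>e\<in>EE. z $ e = p (head G e) - p (tail G e)"
proof -
  define rep where "rep v = (SOME u. u \<in> RR `` {v})" for v
  define p where "p v = z \<bullet> cnt (SOME es. wk G (rep v) es v)" for v
  have eqv: "equiv (verts G) RR" by (rule equiv_RR)
  have rep_in: "(v, rep v) \<in> RR" if "v \<in> verts G" for v
  proof -
    have "v \<in> RR `` {v}" using eqv that by (auto simp: equiv_def refl_on_def)
    then have "rep v \<in> RR `` {v}" unfolding rep_def by (rule someI)
    then show ?thesis by simp
  qed
  have rep_eq: "rep u = rep v" if "(u, v) \<in> RR" for u v
    using equiv_class_eq[OF eqv that] by (simp add: rep_def)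
  have pw: "wk G (rep v) (SOME es. wk G (rep v) es v) v" if "v \<in> verts G" for v
  proof -
    have "(rep v, v) \<in> RR" using rep_in[OF that] eqv by (auto simp: equiv_def sym_def)
    then obtain es where "wk G (rep v) es v" using RR_wk by blast
    then show ?thesis by (rule someI)
  qed
  have "z $ e = p (head G e) - p (tail G e)" if e: "e \<in> EE" for e
  proof -
    let ?u = "tail G e" and ?w = "head G e"
    have uV: "?u \<in> verts G" and wV: "?w \<in> verts G" using e tail_V head_V by auto
    have uw: "(?u, ?w) \<in> RR" using edge_RR e by blast
    then have r: "rep ?u = rep ?w" by (rule rep_eq)
    obtain \<gamma> where g: "wk G ?w \<gamma> (rep ?w)" using RR_wk rep_in[OF wV] by blast
    define \<alpha> where "\<alpha> = (SOME es. wk G (rep ?u) es ?u)"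
    define \<beta> where "\<beta> = (SOME es. wk G (rep ?w) es ?w)"
    have a: "wk G (rep ?w) \<alpha> ?u" using pw[OF uV] r by (simp add: \<alpha>_def)
    have b: "wk G (rep ?w) \<beta> ?w" using pw[OF wV] by (simp add: \<beta>_def)
    have c1: "is_cycle G (\<alpha> @ [e] @ \<gamma>)"
      by (rule wk_closed[where u="rep ?w"]) (rule wk_append[OF a wk_append[OF wk_edge g]], use e in auto)
    have c2: "is_cycle G (\<beta> @ \<gamma>)"
      by (rule wk_closed[where u="rep ?w"]) (rule wk_append[OF b g])
    have "z \<bullet> cnt \<alpha> + z $ e + z \<bullet> cnt \<gamma> = 0"
      using Z[OF c1] by (simp add: cnt_append cnt_Cons inner_add_right inner_axis)
    moreover have "z \<bullet> cnt \<beta> + z \<bullet> cnt \<gamma> = 0"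
      using Z[OF c2] by (simp add: cnt_append inner_add_right)
    moreover have "p ?u = z \<bullet> cnt \<alpha>" "p ?w = z \<bullet> cnt \<beta>" by (simp_all add: p_def \<alpha>_def \<beta>_def)
    ultimately show ?thesis by linarith
  qed
  then show ?thesis by blast
qed

end



lemma sum_list_rotate1_map: "sum_list (map f (rotate1 xs)) = sum_list (map f xs)"
  for f :: "'x \<Rightarrow> real"
  by (cases xs) auto

lemma sum_delta_diff:
  fixes p :: "'a \<Rightarrow> real"
  assumes "finite V" "h \<in> V" "t \<in> V"
  shows "(\<Sum>v\<in>V. p v * ((if h = v then 1 else 0) - (if t = v then 1 else 0))) = p h - p t"
proof -
  have "(\<Sum>v\<in>V. p v * ((if h = v then 1 else 0) - (if t = v then 1 else 0)))
      = (\<Sum>v\<in>V. (if h = v then p v else 0) - (if t = v then p v else 0))"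
    by (rule sum.cong) auto
  also have "\<dots> = p h - p t" using assms by (simp add: sum_subtractf)
  finally show ?thesis .
qed

lemma inner_sum_vec: "(x :: real ^ 'b::finite) \<bullet> y = (\<Sum>e\<in>UNIV. x $ e * y $ e)"
  by (simp add: inner_vec_def)

context
  fixes G :: "('a, 'b::finite) pre_digraph"
  assumes fin: "fin_digraph G"
begin

definition bvec :: "'a \<Rightarrow> real ^ 'b" where
  "bvec v = (\<chi> e. if e \<in> EE G then (if head G e = v then 1 else 0) - (if tail G e = v then 1 else 0) else 0)"

definition "SC = {cycle_vec es | es. simple_cycle G es}"
definition "BB = span ((\<lambda>e. axis e (1::real)) ` EE G)"
definition "AA = span (bvec ` verts G)"
definition "Fl = {y \<in> BB. \<forall>x\<in>AA. orthogonal x y}"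

lemma BB_supp: assumes "y \<in> BB" "e \<notin> EE G" shows "y $ e = 0"
proof -
  have "subspace {y :: real^'b. y $ e = 0}" by (auto simp: subspace_def)
  moreover have "(\<lambda>e. axis e (1::real)) ` EE G \<subseteq> {y. y $ e = 0}" using assms(2) by (auto simp: axis_def)
  ultimately have "BB \<subseteq> {y. y $ e = 0}" unfolding BB_def by (intro span_minimal)
  then show ?thesis using assms(1) by blast
qed

lemma BB_intro: assumes "\<And>e. e \<notin> EE G \<Longrightarrow> y $ e = 0" shows "y \<in> BB"
proof -
  have "y = (\<Sum>e\<in>UNIV. (y $ e) *s axis e 1)" by (simp add: basis_expansion)
  also have "\<dots> = (\<Sum>e\<in>EE G. (y $ e) *s axis e 1)"
    using assms by (intro sum.mono_neutral_right) auto
  also have "\<dots> \<in> BB" unfolding BB_def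
    by (intro span_sum) (simp add: scalar_mult_eq_scaleR span_base span_mul)
  finally show ?thesis .
qed

lemma cycle_in_EE: assumes "is_cycle G es" "e \<in> set es" shows "e \<in> EE G"
  using assms by (auto simp: is_cycle_def walk_def)

lemma bvec_cnt: assumes c: "is_cycle G es" shows "bvec v \<bullet> cnt es = 0"
proof -
  have "bvec v \<bullet> cnt es = sum_list (map (\<lambda>e. bvec v $ e) es)" by (rule inner_cnt)
  also have "\<dots> = sum_list (map (\<lambda>e. (if head G e = v then 1 else 0) - (if tail G e = v then 1 else 0)) es)"
    using cycle_in_EE[OF c] by (intro arg_cong[where f=sum_list] map_cong) (auto simp: bvec_def)
  also have "\<dots> = sum_list (map (\<lambda>e. if head G e = v then 1 else 0) es) - sum_list (map (\<lambda>e. if tail G e = v then 1 else 0) es)"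
    by (simp add: sum_list_subtractf)
  also have "sum_list (map (\<lambda>e. if head G e = v then 1 else 0) es) = sum_list (map (\<lambda>x. if x = v then 1 else (0::real)) (map (head G) es))"
    by (simp add: comp_def)
  also have "\<dots> = sum_list (map (\<lambda>x. if x = v then 1 else (0::real)) (rotate1 (map (tail G) es)))"
    using cycle_heads[OF c] by simp
  also have "\<dots> = sum_list (map (\<lambda>e. if tail G e = v then 1 else 0) es)"
    by (simp add: sum_list_rotate1_map comp_def)
  finally show ?thesis by simp
qed

lemma SC_Fl: "SC \<subseteq> Fl"
proof
  fix s assume "s \<in> SC"
  then obtain es where es: "simple_cycle G es" "s = cycle_vec es" by (auto simp: SC_def)
  have c: "is_cycle G es" using es by (simp add: simple_cycle_def)
  have "s \<in> BB"
  proof (rule BB_intro)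
    fix e assume "e \<notin> EE G"
    then have "e \<notin> set es" using cycle_in_EE[OF c] by blast
    then show "s $ e = 0" using es by (simp add: cycle_vec_def)
  qed
  moreover have "orthogonal x s" if "x \<in> AA" for x
  proof -
    have "orthogonal s x" using that unfolding AA_def
    proof (rule orthogonal_to_span)
      fix y assume "y \<in> bvec ` verts G"
      then obtain v where "y = bvec v" by blast
      then show "orthogonal s y" using bvec_cnt[OF c, of v] es
        by (simp add: orthogonal_def cycle_vec_eq inner_commute)
    qed
    then show ?thesis by (simp add: orthogonal_commute)
  qed
  ultimately show "s \<in> Fl" by (simp add: Fl_def)
qed

lemma Fl_SC: "Fl \<subseteq> span SC"
proof
  fix x assume x: "x \<in> Fl"
  obtain y q where y: "y \<in> span SC" and q: "\<And>w. w \<in> span SC \<Longrightarrow> orthogonal q w" and xyq: "x = y + q"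
    using orthogonal_subspace_decomp_exists by blast
  have qs: "q \<bullet> cnt es = 0" if "simple_cycle G es" for es
  proof -
    have "cycle_vec es \<in> span SC" using that by (auto simp: SC_def intro!: span_base)
    then have "q \<bullet> cycle_vec es = 0" using q by (simp add: orthogonal_def)
    moreover have "es \<noteq> []" using that by (simp add: simple_cycle_def)
    ultimately show ?thesis by (simp add: cycle_vec_eq)
  qed
  have qc: "q \<bullet> cnt es = 0" if "is_cycle G es" for es
    using cycle_decomp[of G q, OF qs] that by blast
  obtain p where p: "\<forall>e\<in>EE G. q $ e = p (head G e) - p (tail G e)"
    using potential[OF fin qc] by blast
  have xB: "x \<in> BB" and xA: "\<And>a. a \<in> AA \<Longrightarrow> orthogonal a x" using x by (auto simp: Fl_def)
  have finE: "finite (EE G)" using finA[OF fin] by (simp add: finite_subset)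
  have bx: "bvec v \<bullet> x = (\<Sum>e\<in>EE G. ((if head G e = v then 1 else 0) - (if tail G e = v then 1 else 0)) * x $ e)" for v
  proof -
    have "bvec v \<bullet> x = (\<Sum>e\<in>UNIV. bvec v $ e * x $ e)" by (rule inner_sum_vec)
    also have "\<dots> = (\<Sum>e\<in>EE G. bvec v $ e * x $ e)"
      by (intro sum.mono_neutral_right) (auto simp: bvec_def)
    also have "\<dots> = (\<Sum>e\<in>EE G. ((if head G e = v then 1 else 0) - (if tail G e = v then 1 else 0)) * x $ e)"
      by (intro sum.cong) (auto simp: bvec_def)
    finally show ?thesis .
  qed
  have b0: "bvec v \<bullet> x = 0" if "v \<in> verts G" for v
  proof -
    have "bvec v \<in> AA" unfolding AA_def using that by (intro span_base) blast
    then show ?thesis using xA by (simp add: orthogonal_def)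
  qed
  have "q \<bullet> x = (\<Sum>e\<in>UNIV. q $ e * x $ e)" by (rule inner_sum_vec)
  also have "\<dots> = (\<Sum>e\<in>EE G. q $ e * x $ e)"
    using BB_supp[OF xB] by (intro sum.mono_neutral_right) auto
  also have "\<dots> = (\<Sum>e\<in>EE G. (\<Sum>v\<in>verts G. p v * ((if head G e = v then 1 else 0) - (if tail G e = v then 1 else 0))) * x $ e)"
  proof (intro sum.cong refl)
    fix e assume e: "e \<in> EE G"
    then have "e \<in> arcs G" by simp
    then show "q $ e * x $ e = (\<Sum>v\<in>verts G. p v * ((if head G e = v then 1 else 0) - (if tail G e = v then 1 else 0))) * x $ e"
      using p e sum_delta_diff[OF finV[OF fin] head_V[OF fin] tail_V[OF fin], of e e p] by simp
  qed
  also have "\<dots> = (\<Sum>v\<in>verts G. p v * (\<Sum>e\<in>EE G. ((if head G e = v then 1 else 0) - (if tail G e = v then 1 else 0)) * x $ e))"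
    by (simp add: sum_distrib_left sum_distrib_right mult.assoc) (rule sum.swap)
  also have "\<dots> = (\<Sum>v\<in>verts G. p v * (bvec v \<bullet> x))" by (simp add: bx)
  also have "\<dots> = 0" using b0 by simp
  finally have qx: "q \<bullet> x = 0" .
  have "q \<bullet> y = 0" using q[OF y] by (simp add: orthogonal_def)
  then have "q \<bullet> q = 0" using qx xyq by (simp add: inner_add_right)
  then have "q = 0" by simp
  then show "x \<in> span SC" using y xyq by simp
qed

lemma span_SC: "span SC = Fl"
proof
  show "Fl \<subseteq> span SC" by (rule Fl_SC)
  have "subspace Fl"
    unfolding Fl_def BB_def
    by (auto simp: subspace_def span_zero span_add span_mul orthogonal_clauses)
  then show "span SC \<subseteq> Fl" using SC_Fl by (intro span_minimal)
qed

end



context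
  fixes G :: "('a, 'b::finite) pre_digraph"
  assumes fin: "fin_digraph G"
begin

lemma dim_BB: "dim (BB G) = card (EE G)"
proof -
  let ?X = "(\<lambda>e. axis e (1::real)) ` EE G"
  have "?X \<subseteq> Basis" by (auto simp: Basis_real_def)
  then have ind: "independent ?X" by (metis independent_mono independent_Basis)
  have inj: "inj_on (\<lambda>e. axis e (1::real)) (EE G)" by (auto simp: inj_on_def axis_eq_axis)
  have "dim (BB G) = card ?X" unfolding BB_def[OF fin] using ind by (rule dim_span_eq_card_independent)
  also have "\<dots> = card (EE G)" using inj by (rule card_image)
  finally show ?thesis .
qed

lemma rel_const:
  assumes s: "(\<Sum>v\<in>verts G. c v *\<^sub>R bvec G v) = 0" and uw: "(u, w) \<in> RR G"
  shows "c u = c w"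
proof -
  have edge: "c (tail G e) = c (head G e)" if e: "e \<in> EE G" for e
  proof -
    have "0 = (\<Sum>v\<in>verts G. c v *\<^sub>R bvec G v) $ e" using s by simp
    also have "\<dots> = (\<Sum>v\<in>verts G. c v * ((if head G e = v then 1 else 0) - (if tail G e = v then 1 else 0)))"
      using e by (simp add: bvec_def[OF fin])
    also have "\<dots> = c (head G e) - c (tail G e)"
      using e by (intro sum_delta_diff finV[OF fin] head_V[OF fin] tail_V[OF fin]) auto
    finally show ?thesis by simp
  qed
  have sstep: "c x = c y" if "(x, y) \<in> SS G" for x y
    using that
  proof (rule UnE)
    assume "(x, y) \<in> {(tail G e, head G e) | e. e \<in> EE G}"
    then obtain e where "e \<in> EE G" "x = tail G e" "y = head G e" by blast
    then show ?thesis using edge by simp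
  next
    assume "(x, y) \<in> {(head G e, tail G e) | e. e \<in> EE G}"
    then obtain e where "e \<in> EE G" "x = head G e" "y = tail G e" by blast
    then show ?thesis using edge by simp
  qed
  have tr: "c u = c w" if "(u, w) \<in> (SS G)\<^sup>+"
    using that
  proof (induction rule: trancl_induct)
    case (base y) then show ?case by (rule sstep)
  next
    case (step y z) then show ?case using sstep by simp
  qed
  show ?thesis
  proof (cases "(u, w) \<in> Id_on (verts G)")
    case True then show ?thesis by (auto elim: Id_onE)
  next
    case False then show ?thesis using uw tr unfolding RR_eq[OF fin] by blast
  qed
qed

definition "rp K = (SOME v. v \<in> K)"
definition "R0 = rp ` (verts G // RR G)"
definition "V' = verts G - R0"

lemma eqv: "equiv (verts G) (RR G)" by (rule equiv_RR[OF fin])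

lemma rp_in: "K \<in> verts G // RR G \<Longrightarrow> rp K \<in> K"
  unfolding rp_def using in_quotient_imp_non_empty[OF eqv] by (simp add: some_in_eq)

lemma K_sub: "K \<in> verts G // RR G \<Longrightarrow> K \<subseteq> verts G"
  using in_quotient_imp_subset[OF eqv] by blast

lemma rp_unique: assumes "K \<in> verts G // RR G" "K' \<in> verts G // RR G" "rp K' \<in> K" shows "K' = K"
  using quotient_disj[OF eqv assms(1,2)] rp_in[OF assms(2)] assms(3) by blast

lemma card_R0: "card R0 = card (verts G // RR G)"
  unfolding R0_def
proof (rule card_image)
  show "inj_on rp (verts G // RR G)"
    by (rule inj_onI) (metis rp_in rp_unique)
qed

lemma R0_sub: "R0 \<subseteq> verts G"
  unfolding R0_def using rp_in K_sub by blast

lemma coef_zero: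
  assumes s: "(\<Sum>v\<in>V'. c v *\<^sub>R bvec G v) = 0" and v: "v \<in> V'"
  shows "c v = 0"
proof -
  define c' where "c' v = (if v \<in> V' then c v else 0)" for v
  have "(\<Sum>v\<in>verts G. c' v *\<^sub>R bvec G v) = (\<Sum>v\<in>V'. c' v *\<^sub>R bvec G v)"
    using finV[OF fin] by (intro sum.mono_neutral_right) (auto simp: V'_def c'_def)
  also have "\<dots> = 0" using s by (simp add: c'_def)
  finally have s': "(\<Sum>v\<in>verts G. c' v *\<^sub>R bvec G v) = 0" .
  have vV: "v \<in> verts G" using v by (simp add: V'_def)
  let ?K = "RR G `` {v}"
  have K: "?K \<in> verts G // RR G" using vV by (rule quotientI)
  have "rp ?K \<in> ?K" using rp_in[OF K] .
  then have "(v, rp ?K) \<in> RR G" by simp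
  then have "c' v = c' (rp ?K)" using rel_const[OF s'] by blast
  moreover have "rp ?K \<notin> V'" using K by (simp add: V'_def R0_def)
  ultimately show ?thesis using v by (simp add: c'_def)
qed

lemma inj_bvec: "inj_on (bvec G) V'"
proof (rule inj_onI, rule ccontr)
  fix u w assume u: "u \<in> V'" and w: "w \<in> V'" and eq: "bvec G u = bvec G w" and ne: "u \<noteq> w"
  define c where "c v = (if v = u then 1 else if v = w then -1 else (0::real))" for v
  have "(\<Sum>v\<in>V'. c v *\<^sub>R bvec G v) = (\<Sum>v\<in>V'. (if v = u then bvec G v else 0) - (if v = w then bvec G v else 0))"
    using ne by (intro sum.cong) (auto simp: c_def)
  also have "\<dots> = bvec G u - bvec G w"
    using u w finV[OF fin] by (simp add: sum_subtractf V'_def)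
  also have "\<dots> = 0" using eq by simp
  finally have "c u = 0" using coef_zero u by blast
  then show False by (simp add: c_def)
qed

lemma ind_bvec: "independent (bvec G ` V')"
  unfolding independent_explicit
proof (intro conjI allI impI ballI)
  show "finite (bvec G ` V')" using finV[OF fin] by (simp add: V'_def)
  fix d x assume s: "(\<Sum>y\<in>bvec G ` V'. d y *\<^sub>R y) = 0" and x: "x \<in> bvec G ` V'"
  have "(\<Sum>v\<in>V'. d (bvec G v) *\<^sub>R bvec G v) = 0" using s by (simp add: sum.reindex[OF inj_bvec])
  then show "d x = 0" using x coef_zero[of "\<lambda>v. d (bvec G v)"] by blast
qed

lemma class_sum: assumes K: "K \<in> verts G // RR G" shows "(\<Sum>v\<in>K. bvec G v) = 0"
proof -
  have finK: "finite K" using K_sub[OF K] finV[OF fin] by (rule finite_subset)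
  show ?thesis
  proof (subst vec_eq_iff, intro allI)
    fix e
    show "(\<Sum>v\<in>K. bvec G v) $ e = 0 $ e"
    proof (cases "e \<in> EE G")
      case False
      then have "\<forall>v. bvec G v $ e = 0" by (simp add: bvec_def[OF fin] del: full_part_simps)
      then show ?thesis by simp
    next
      case True
      have r: "(tail G e, head G e) \<in> RR G" using edge_RR[OF fin True] .
      have r': "(head G e, tail G e) \<in> RR G" using r eqv by (auto simp: equiv_def sym_def)
      have iff: "head G e \<in> K \<longleftrightarrow> tail G e \<in> K"
        using in_quotient_imp_closed[OF eqv K] r r' by blast
      have "(\<Sum>v\<in>K. bvec G v) $ e = (\<Sum>v\<in>K. (if head G e = v then 1 else 0) - (if tail G e = v then (1::real) else 0))"
        using True by (simp add: bvec_def[OF fin])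
      also have "\<dots> = 0" using finK iff by (simp add: sum_subtractf)
      finally show ?thesis by simp
    qed
  qed
qed

lemma span_bvec: "AA G = span (bvec G ` V')"
proof
  show "span (bvec G ` V') \<subseteq> AA G" unfolding AA_def[OF fin] V'_def by (intro span_mono) blast
  have "bvec G ` verts G \<subseteq> span (bvec G ` V')"
  proof
    fix y assume "y \<in> bvec G ` verts G"
    then obtain v where v: "v \<in> verts G" "y = bvec G v" by blast
    show "y \<in> span (bvec G ` V')"
    proof (cases "v \<in> V'")
      case True then show ?thesis using v by (simp add: span_base)
    next
      case False
      then obtain K where K: "K \<in> verts G // RR G" and vK: "v = rp K" using v by (auto simp: V'_def R0_def)
      have finK: "finite K" using K_sub[OF K] finV[OF fin] by (rule finite_subset)
      have vinK: "v \<in> K" using rp_in[OF K] vK by simp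
      have sub: "K - {v} \<subseteq> V'"
      proof
        fix u assume u: "u \<in> K - {v}"
        have "u \<in> verts G" using u K_sub[OF K] by blast
        moreover have "u \<notin> R0"
        proof
          assume "u \<in> R0"
          then obtain K' where K': "K' \<in> verts G // RR G" "u = rp K'" by (auto simp: R0_def)
          then have "K' = K" using rp_unique[OF K K'(1)] u by simp
          then show False using u K' vK by simp
        qed
        ultimately show "u \<in> V'" by (simp add: V'_def)
      qed
      have "0 = (\<Sum>u\<in>K. bvec G u)" using class_sum[OF K] by simp
      also have "\<dots> = bvec G v + (\<Sum>u\<in>K - {v}. bvec G u)" using finK vinK by (simp add: sum.remove)
      finally have "bvec G v = - (\<Sum>u\<in>K - {v}. bvec G u)" by (simp add: eq_neg_iff_add_eq_0)
      moreover have "(\<Sum>u\<in>K - {v}. bvec G u) \<in> span (bvec G ` V')"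
        using sub by (intro span_sum span_base) blast
      ultimately show ?thesis using v span_neg by metis
    qed
  qed
  then show "AA G \<subseteq> span (bvec G ` V')" unfolding AA_def[OF fin]
    by (intro span_minimal subspace_span)
qed

lemma dim_AA: "int (dim (AA G)) = int (card (verts G)) - int (card (verts G // RR G))"
proof -
  have "dim (AA G) = card (bvec G ` V')" using span_bvec ind_bvec by (simp add: dim_eq_card_independent)
  also have "\<dots> = card V'" using inj_bvec by (rule card_image)
  also have "\<dots> = card (verts G) - card R0" unfolding V'_def
    using R0_sub finV[OF fin] by (simp add: card_Diff_subset finite_subset)
  moreover have "card (verts G // RR G) \<le> card (verts G)"
    using card_R0 card_mono[OF finV[OF fin] R0_sub] by simp
  ultimately show ?thesis using card_R0 by (simp add: of_nat_diff)
qed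

end



theorem mainTheorem4:
  fixes G :: "('a, 'b::finite) pre_digraph"
  assumes "fin_digraph G"
    and "\<exists>es. is_cycle G es \<and> es \<noteq> []"
  shows "aff_dim (cycle_polytope G) =
    int (card (arcs (full_part G))) - int (card (verts G)) + int (num_components (full_part G)) - 1"
proof -
  note fin = assms(1)
  have AB: "AA G \<subseteq> BB G"
  proof -
    have "bvec G ` verts G \<subseteq> BB G"
    proof
      fix y assume "y \<in> bvec G ` verts G"
      then obtain v where "y = bvec G v" by blast
      then show "y \<in> BB G" by (intro BB_intro[OF fin]) (simp add: bvec_def[OF fin] del: full_part_simps)
    qed
    then show ?thesis unfolding AA_def[OF fin]
      by (intro span_minimal) (auto simp: BB_def[OF fin])
  qed
  have dsum: "dim (Fl G) + dim (AA G) = dim (BB G)"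
  proof -
    have s1: "subspace (AA G)" "subspace (BB G)"
      by (simp_all add: AA_def[OF fin] BB_def[OF fin] subspace_span del: full_part_simps)
    show ?thesis unfolding Fl_def[OF fin] by (rule dim_subspace_orthogonal_to_vectors[OF s1 AB])
  qed
  have dSC: "dim (SC G) = dim (Fl G)" using span_SC[OF fin] dim_span by metis
  obtain es0 where es0: "is_cycle G es0" "es0 \<noteq> []" using assms(2) by blast
  have ne: "SC G \<noteq> {}"
  proof
    assume e: "SC G = {}"
    have "cnt es0 \<bullet> cnt es0 = 0"
    proof (rule cycle_decomp[OF _ es0(1)])
      fix es assume "simple_cycle G es"
      then have "cycle_vec es \<in> SC G" by (auto simp: SC_def[OF fin])
      then show "cnt es0 \<bullet> cnt es = 0" using e by simp
    qed
    then have "cnt es0 = 0" by simp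
    moreover have "cnt es0 $ hd es0 \<noteq> 0" using es0(2) by (cases es0) (auto simp: cnt_def)
    ultimately show False by simp
  qed
  define one :: "real ^ 'b" where "one = (\<chi> i. 1)"
  have "SC G \<subseteq> {x. one \<bullet> x = 1}"
  proof
    fix s assume "s \<in> SC G"
    then obtain es where es: "simple_cycle G es" "s = cycle_vec es" by (auto simp: SC_def[OF fin])
    have "one \<bullet> cnt es = real (length es)"
      by (simp add: inner_cnt one_def sum_list_triv)
    moreover have "es \<noteq> []" using es by (simp add: simple_cycle_def)
    ultimately show "s \<in> {x. one \<bullet> x = 1}" using es by (simp add: cycle_vec_eq)
  qed
  then have "affine hull SC G \<subseteq> {x. one \<bullet> x = 1}" by (intro hull_minimal affine_hyperplane)
  then have n0: "0 \<notin> affine hull SC G" by auto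
  have "aff_dim (insert 0 (SC G)) = aff_dim (SC G) + 1" using n0 by (simp add: aff_dim_insert)
  moreover have "aff_dim (insert 0 (SC G)) = int (dim (insert 0 (SC G)))"
    by (rule aff_dim_zero) (simp add: hull_inc)
  moreover have "dim (insert 0 (SC G)) = dim (SC G)" by (metis dim_span span_insert_0)
  moreover have "cycle_polytope G = convex hull (SC G)" by (simp add: cycle_polytope_def SC_def[OF fin])
  moreover have "num_components (full_part G) = card (verts G // RR G)" by (simp add: num_components_def)
  ultimately show ?thesis using dsum dSC dim_BB[OF fin] dim_AA[OF fin] aff_dim_convex_hull
    by (smt (verit) of_nat_add)
qed


end
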